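(* Let $i\geq1$ and $j\ge0$. The map $\varphi_i$ carries $M_i(j)$ isomorphically onto $N_{i-1}(\lfloor j/p\rfloor)$.
   Context: Let $p$ be an odd prime. In the mod $p$ dual Steenrod algebra let $\zeta_n,\overline{\tau}_n$ be the conjugates of Milnor's $\xi_n,\tau_n$ ($\zeta_0=1$). For $n\ge0$ let $(A/\!/E(n))_*=\mathbb{F}_p[\zeta_1,\zeta_2,\ldots]\otimes E(\overline{\tau}_{n+1},\overline{\tau}_{n+2},\ldots)$, a comodule over $E(n)_*=E(\overline{\tau}_0,\ldots,\overline{\tau}_n)$. Weight: $\mathrm{wt}(\zeta_k)=\mathrm{wt}(\overline{\tau}_k)=p^k$, additive on products of monomials. $M_i(j)$ is the span of the monomials of $(A/\!/E(i))_*$ of weight exactly $pj$; $N_{i-1}(m)$ is the span of the monomials of $(A/\!/E(i-1))_*$ of weight $\le pm$. $\varphi_i\colon(A/\!/E(i))_*\to(A/\!/E(i-1))_*$ is the algebra map with $\zeta_k\mapsto\zeta_{k-1}$ ($k\ge1$) and $\overline{\tau}_j\mapsto\overline{\tau}_{j-1}$ ($j\ge i+1$); it is a map of ungraded $E(i)_*$-comodules. *)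

theory Defs
  imports Main "HOL-Computational_Algebra.Primes"
begin

text \<open>A monomial of the dual Steenrod algebra is encoded as a pair (a, S):
  a k is the exponent of zeta_k (k \<ge> 1; a 0 = 0 since zeta_0 = 1),
  S is the finite set of indices s of the factors taubar_s (in increasing order).\<close>

type_synonym monom = "(nat \<Rightarrow> nat) \<times> nat set"

text \<open>Monomials of (A//E(n))_*: finitely many zeta's, taubar_s only for s \<ge> n+1.\<close>
definition monoms :: "nat \<Rightarrow> monom set" where
  "monoms n = {(a, S). a 0 = 0 \<and> finite {k. a k \<noteq> 0} \<and> finite S \<and> (\<forall>s\<in>S. n < s)}"

definition wt :: "nat \<Rightarrow> monom \<Rightarrow> nat" where
  "wt p m = (\<Sum>k\<in>{k. fst m k \<noteq> 0}. fst m k * p ^ k) + (\<Sum>s\<in>snd m. p ^ s)"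

definition AE :: "nat \<Rightarrow> (monom \<Rightarrow> 'a::field) set" where
  "AE n = {v. finite {m. v m \<noteq> 0} \<and> (\<forall>m. v m \<noteq> 0 \<longrightarrow> m \<in> monoms n)}"

definition Msp :: "nat \<Rightarrow> nat \<Rightarrow> nat \<Rightarrow> (monom \<Rightarrow> 'a::field) set" where
  "Msp p i j = {v \<in> AE i. \<forall>m. v m \<noteq> 0 \<longrightarrow> wt p m = p * j}"

text \<open>N_{i-1}(m): span of monomials of (A//E(i-1))_* of weight at most p*m (argument n = i-1).\<close>
definition Nsp :: "nat \<Rightarrow> nat \<Rightarrow> nat \<Rightarrow> (monom \<Rightarrow> 'a::field) set" where
  "Nsp p n mm = {v \<in> AE n. \<forall>m. v m \<noteq> 0 \<longrightarrow> wt p m \<le> p * mm}"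

text \<open>Effect of phi on monomials: zeta_k \<mapsto> zeta_{k-1} (zeta_0 = 1), taubar_s \<mapsto> taubar_{s-1}.
  Since the shift preserves the order of the taubar factors, no signs arise.\<close>
definition phi_mono :: "monom \<Rightarrow> monom" where
  "phi_mono m = ((\<lambda>k. if k = 0 then 0 else fst m (Suc k)), (\<lambda>s. s - 1) ` snd m)"

definition phi :: "(monom \<Rightarrow> 'a::field) \<Rightarrow> (monom \<Rightarrow> 'a)" where
  "phi v = (\<lambda>m'. \<Sum>m\<in>{m. v m \<noteq> 0 \<and> phi_mono m = m'}. v m)"

end

theory Submission
  imports Defs
begin

definition Zs :: "nat \<Rightarrow> (nat \<Rightarrow> nat) \<Rightarrow> nat" where
  "Zs p a = (\<Sum>k\<in>{k. a k \<noteq> 0}. a k * p ^ k)"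

lemma wt_Zs: "wt p m = Zs p (fst m) + (\<Sum>s\<in>snd m. p ^ s)"
  by (simp add: wt_def Zs_def)

lemma Zs_bound:
  assumes "{k. a k \<noteq> 0} \<subseteq> {..<N}"
  shows "Zs p a = (\<Sum>k<N. a k * p ^ k)"
  unfolding Zs_def
  by (rule sum.mono_neutral_left) (use assms in auto)

lemma Zs_shift:
  assumes a0: "a 0 = 0" and fin: "finite {k. a k \<noteq> 0}"
  shows "Zs p a = a 1 * p + p * Zs p (\<lambda>k. if k = 0 then 0 else a (Suc k))"
proof -
  obtain N where N: "{k. a k \<noteq> 0} \<subseteq> {..<N}"
    using fin unfolding finite_nat_set_iff_bounded by auto
  have N2: "{k. a k \<noteq> 0} \<subseteq> {..<Suc (Suc N)}" using N by auto
  have N3: "{k. (if k = 0 then 0 else a (Suc k)) \<noteq> 0} \<subseteq> {..<Suc N}"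
    using N by (auto split: if_splits)
  have "Zs p a = (\<Sum>k<Suc (Suc N). a k * p ^ k)" by (rule Zs_bound[OF N2])
  also have "\<dots> = a 1 * p + (\<Sum>k<N. a (Suc (Suc k)) * p ^ Suc (Suc k))"
    by (simp only: sum.lessThan_Suc_shift) (simp add: a0)
  also have "(\<Sum>k<N. a (Suc (Suc k)) * p ^ Suc (Suc k)) = p * (\<Sum>k<N. a (Suc (Suc k)) * p ^ Suc k)"
    by (simp add: sum_distrib_left mult.commute mult.left_commute)
  also have "(\<Sum>k<N. a (Suc (Suc k)) * p ^ Suc k) = Zs p (\<lambda>k. if k = 0 then 0 else a (Suc k))"
    by (subst Zs_bound[OF N3]) (simp only: sum.lessThan_Suc_shift, simp)
  finally show ?thesis .
qed

lemma T_shift: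
  assumes "0 \<notin> S"
  shows "(\<Sum>s\<in>S. (p::nat) ^ s) = p * (\<Sum>s\<in>(\<lambda>s. s - 1) ` S. p ^ s)"
proof -
  have inj: "inj_on (\<lambda>s. s - 1) S" using assms unfolding inj_on_def by (metis Suc_pred' gr0I)
  have "(\<Sum>s\<in>(\<lambda>s. s - 1) ` S. p ^ s) = (\<Sum>s\<in>S. p ^ (s - 1))"
    using sum.reindex[OF inj, of "\<lambda>s. p ^ s"] by simp
  moreover have "(\<Sum>s\<in>S. p ^ s) = (\<Sum>s\<in>S. p * p ^ (s - 1))"
  proof (rule sum.cong)
    fix s assume "s \<in> S"
    then have "s = Suc (s - 1)" using assms by (cases s) auto
    then show "p ^ s = p * p ^ (s - 1)" by (metis power_Suc)
  qed simp
  ultimately show ?thesis by (simp add: sum_distrib_left)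
qed

lemma wt_phi:
  assumes "fst m 0 = 0" "finite {k. fst m k \<noteq> 0}" "0 \<notin> snd m"
  shows "wt p m = p * (fst m 1 + wt p (phi_mono m))"
  using Zs_shift[OF assms(1,2), of p] T_shift[OF assms(3), of p]
  by (simp add: wt_Zs phi_mono_def algebra_simps)

definition psi :: "nat \<Rightarrow> nat \<Rightarrow> monom \<Rightarrow> monom" where
  "psi p j m' = ((\<lambda>k. if k = 0 then 0 else if k = 1 then j - wt p m' else fst m' (k - 1)), Suc ` snd m')"

lemma phi_psi: "fst m' 0 = 0 \<Longrightarrow> phi_mono (psi p j m') = m'"
  by (cases m') (auto simp: phi_mono_def psi_def image_image)

lemma phi_mono_in:
  assumes "m \<in> monoms i" "1 \<le> i"
  shows "phi_mono m \<in> monoms (i - 1)"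
proof -
  obtain a S where m: "m = (a, S)" by (cases m)
  have "{k. (if k = 0 then 0 else a (Suc k)) \<noteq> 0} \<subseteq> (\<lambda>k. k - 1) ` {k. a k \<noteq> 0}"
    by (auto split: if_splits intro!: image_eqI[where x="Suc _"])
  moreover have "finite {k. a k \<noteq> 0}" using assms m by (auto simp: monoms_def)
  ultimately have "finite {k. (if k = 0 then 0 else a (Suc k)) \<noteq> 0}"
    using finite_subset by blast
  then show ?thesis using assms m unfolding monoms_def phi_mono_def
    by (simp only: mem_Collect_eq case_prod_conv fst_conv snd_conv) auto
qed

lemma psi_in:
  assumes "m' \<in> monoms (i - 1)" "1 \<le> i"
  shows "psi p j m' \<in> monoms i"
proof -
  obtain a S where m: "m' = (a, S)" by (cases m')
  have "{k. (if k = 0 then 0 else if k = 1 then j - wt p m' else a (k - 1)) \<noteq> 0}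
     \<subseteq> insert 1 (Suc ` {k. a k \<noteq> 0})"
    by (auto split: if_splits intro!: image_eqI[where x="_ - 1"])
  moreover have "finite {k. a k \<noteq> 0}" using assms m by (auto simp: monoms_def)
  ultimately have "finite {k. (if k = 0 then 0 else if k = 1 then j - wt p m' else a (k - 1)) \<noteq> 0}"
    using finite_subset by blast
  then show ?thesis using assms m unfolding monoms_def psi_def
    by (simp only: mem_Collect_eq case_prod_conv fst_conv snd_conv) auto
qed


lemma zero_notin_snd:
  assumes "m \<in> monoms n" shows "0 \<notin> snd m"
  using assms by (auto simp: monoms_def)

lemma wt_dvd:
  assumes "m \<in> monoms n"
  shows "wt p m = p * (fst m 1 + wt p (phi_mono m))"
  using assms by (intro wt_phi) (auto simp: monoms_def)

definition DD :: "nat \<Rightarrow> nat \<Rightarrow> nat \<Rightarrow> monom set" where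
  "DD p i j = {m \<in> monoms i. wt p m = p * j}"
definition EE :: "nat \<Rightarrow> nat \<Rightarrow> nat \<Rightarrow> monom set" where
  "EE p i j = {m' \<in> monoms (i - 1). wt p m' \<le> p * (j div p)}"

context
  fixes p i j :: nat
  assumes p0: "0 < p" and i1: "1 \<le> i"
begin


lemma phi_DD: assumes "m \<in> (DD p i j)" shows "phi_mono m \<in> (EE p i j)"
proof -
  have mi: "m \<in> monoms i" and w: "wt p m = p * j" using assms by (auto simp: DD_def)
  have pm: "phi_mono m \<in> monoms (i - 1)" using phi_mono_in[OF mi i1] .
  have "j = fst m 1 + wt p (phi_mono m)" using wt_dvd[OF mi, of p] w p0 by simp
  then have le: "wt p (phi_mono m) \<le> j" by simp
  have S0: "\<forall>s\<in>snd m. i < s" using mi by (auto simp: monoms_def)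
  have "0 \<notin> snd (phi_mono m)"
  proof
    assume "0 \<in> snd (phi_mono m)"
    then obtain s where "s \<in> snd m" "s - 1 = 0" by (auto simp: phi_mono_def)
    with S0 i1 show False by fastforce
  qed
  moreover have "fst (phi_mono m) 0 = 0" "finite {k. fst (phi_mono m) k \<noteq> 0}"
    using pm by (auto simp: monoms_def)
  ultimately obtain q where q: "wt p (phi_mono m) = p * q"
    using wt_phi by blast
  then have "q \<le> j div p" using le p0
    by (metis less_eq_div_iff_mult_less_eq mult.commute)
  then have "wt p (phi_mono m) \<le> p * (j div p)" using q by simp
  then show ?thesis using pm by (simp add: EE_def)
qed

lemma psi_EE: assumes "m' \<in> (EE p i j)" shows "psi p j m' \<in> (DD p i j)" "phi_mono (psi p j m') = m'"
proof -
  have mi: "m' \<in> monoms (i - 1)" and w: "wt p m' \<le> p * (j div p)" using assms by (auto simp: EE_def)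
  show pp: "phi_mono (psi p j m') = m'" using mi by (intro phi_psi) (auto simp: monoms_def)
  have ps: "psi p j m' \<in> monoms i" using psi_in[OF mi i1] .
  have "wt p (psi p j m') = p * (fst (psi p j m') 1 + wt p m')"
    using wt_dvd[OF ps, of p] pp by simp
  also have "fst (psi p j m') 1 = j - wt p m'" by (simp add: psi_def)
  also have "wt p m' \<le> j" using w by (metis dual_order.trans div_times_less_eq_dividend mult.commute)
  then have "p * (j - wt p m' + wt p m') = p * j" by simp
  finally show "psi p j m' \<in> (DD p i j)" using ps by (simp add: DD_def)
qed

lemma psi_phi: assumes "m \<in> (DD p i j)" shows "psi p j (phi_mono m) = m"
proof -
  have mi: "m \<in> monoms i" and w: "wt p m = p * j" using assms by (auto simp: DD_def)
  have j: "j = fst m 1 + wt p (phi_mono m)" using wt_dvd[OF mi, of p] w p0 by simp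
  obtain a S where m: "m = (a, S)" by (cases m)
  have a0: "a 0 = 0" and S0: "\<forall>s\<in>S. i < s" using mi m by (auto simp: monoms_def)
  have "fst (psi p j (phi_mono m)) = a"
  proof
    fix k show "fst (psi p j (phi_mono m)) k = a k"
      using j a0 m by (cases k) (auto simp: psi_def phi_mono_def)
  qed
  moreover have "snd (psi p j (phi_mono m)) = S"
  proof -
    have "Suc ` ((\<lambda>s. s - 1) ` S) = S"
      using S0 i1 by (force simp: image_image intro: image_eqI[where x="_"])
    then show ?thesis using m by (simp add: psi_def phi_mono_def)
  qed
  ultimately show ?thesis using m by (metis prod.collapse)
qed

lemma phi_formula:
  assumes "\<forall>m. v m \<noteq> 0 \<longrightarrow> m \<in> (DD p i j)"
  shows "phi v m' = (if m' \<in> (EE p i j) then v (psi p j m') else 0)"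
proof -
  have sub: "{m. v m \<noteq> 0 \<and> phi_mono m = m'} \<subseteq> {psi p j m'}"
    using assms psi_phi by auto
  show ?thesis
  proof (cases "m' \<in> (EE p i j) \<and> v (psi p j m') \<noteq> 0")
    case True
    then have "{m. v m \<noteq> 0 \<and> phi_mono m = m'} = {psi p j m'}"
      using sub psi_EE[of m'] by auto
    then show ?thesis using True by (simp add: phi_def)
  next
    case False
    have "{m. v m \<noteq> 0 \<and> phi_mono m = m'} = {}"
    proof -
      { fix m assume "v m \<noteq> 0" "phi_mono m = m'"
        then have "m = psi p j m'" "m' \<in> (EE p i j)" using sub assms[rule_format, of m] phi_DD[of m] by auto
        with False \<open>v m \<noteq> 0\<close> have False by auto }
      then show ?thesis by auto
    qed
    then show ?thesis using False unfolding phi_def by (simp only: sum.empty) auto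
  qed
qed

end


theorem mainTheorem13:
  fixes p i j :: nat
  assumes "prime p" and "odd p"
    and "card (UNIV :: 'a::{field,finite} set) = p"
    and "1 \<le> i"
  shows "bij_betw (phi :: (monom \<Rightarrow> 'a) \<Rightarrow> _) (Msp p i j) (Nsp p (i - 1) (j div p))
    \<and> (\<forall>u\<in>Msp p i j. \<forall>v\<in>Msp p i j. \<forall>c::'a.
          phi (\<lambda>m. u m + v m) = (\<lambda>m. phi u m + phi v m) \<and> phi (\<lambda>m. c * v m) = (\<lambda>m. c * phi v m))"
proof -
  have p0: "0 < p" using assms(1) prime_gt_0_nat by blast
  note i1 = assms(4)
  let ?D = "DD p i j" and ?E = "EE p i j" and ?psi = "psi p j"
  have MD: "\<forall>m. v m \<noteq> 0 \<longrightarrow> m \<in> ?D" if "v \<in> Msp p i j" for v :: "monom \<Rightarrow> 'a"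
    using that by (auto simp: Msp_def AE_def DD_def)
  have F: "phi v m' = (if m' \<in> ?E then v (?psi m') else 0)"
    if "\<forall>m. v m \<noteq> 0 \<longrightarrow> m \<in> ?D" for v :: "monom \<Rightarrow> 'a" and m'
    using phi_formula[OF p0 i1 that] .
  have inj: "inj_on (phi :: (monom \<Rightarrow> 'a) \<Rightarrow> _) (Msp p i j)"
  proof (rule inj_onI)
    fix u v :: "monom \<Rightarrow> 'a" assume u: "u \<in> Msp p i j" and v: "v \<in> Msp p i j" and e: "phi u = phi v"
    show "u = v"
    proof
      fix m show "u m = v m"
      proof (cases "m \<in> ?D")
        case True
        have "u m = phi u (phi_mono m)"
          using F[OF MD[OF u], of "phi_mono m"] phi_DD[OF p0 i1 True] psi_phi[OF p0 i1 True] by simp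
        also have "\<dots> = phi v (phi_mono m)" using e by simp
        also have "\<dots> = v m"
          using F[OF MD[OF v], of "phi_mono m"] phi_DD[OF p0 i1 True] psi_phi[OF p0 i1 True] by simp
        finally show ?thesis .
      next
        case False
        have "u m = 0" using MD[OF u] False by blast
        moreover have "v m = 0" using MD[OF v] False by blast
        ultimately show ?thesis by simp
      qed
    qed
  qed
  have img1: "phi v \<in> Nsp p (i - 1) (j div p)" if v: "v \<in> Msp p i j" for v :: "monom \<Rightarrow> 'a"
  proof -
    have "{m'. phi v m' \<noteq> 0} \<subseteq> phi_mono ` {m. v m \<noteq> 0}"
    proof
      fix m' assume "m' \<in> {m'. phi v m' \<noteq> 0}"
      then have "m' \<in> ?E" "v (?psi m') \<noteq> 0" using F[OF MD[OF v], of m'] by (auto split: if_splits)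
      then show "m' \<in> phi_mono ` {m. v m \<noteq> 0}"
        using psi_EE(2)[OF p0 i1 \<open>m' \<in> ?E\<close>] by (intro image_eqI[where x="?psi m'"]) auto
    qed
    moreover have "finite {m. v m \<noteq> 0}" using v by (auto simp: Msp_def AE_def)
    ultimately have fin: "finite {m'. phi v m' \<noteq> 0}" using finite_subset by blast
    have "m' \<in> ?E" if "phi v m' \<noteq> 0" for m'
      using that F[OF MD[OF v], of m'] by (auto split: if_splits)
    then show ?thesis using fin unfolding Nsp_def AE_def EE_def by blast
  qed
  have img2: "w \<in> phi ` Msp p i j" if w: "w \<in> Nsp p (i - 1) (j div p)" for w :: "monom \<Rightarrow> 'a"
  proof -
    define v where "v = (\<lambda>m. if m \<in> ?D then w (phi_mono m) else 0)"
    have wE: "w m' \<noteq> 0 \<Longrightarrow> m' \<in> ?E" for m' using w unfolding Nsp_def AE_def EE_def by blast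
    have vD: "\<forall>m. v m \<noteq> 0 \<longrightarrow> m \<in> ?D" by (auto simp: v_def)
    have "{m. v m \<noteq> 0} \<subseteq> ?psi ` {m'. w m' \<noteq> 0}"
    proof
      fix m assume "m \<in> {m. v m \<noteq> 0}"
      then have "m \<in> ?D" "w (phi_mono m) \<noteq> 0" by (auto simp: v_def split: if_splits)
      then show "m \<in> ?psi ` {m'. w m' \<noteq> 0}"
        using psi_phi[OF p0 i1 \<open>m \<in> ?D\<close>] by (intro image_eqI[where x="phi_mono m"]) auto
    qed
    moreover have "finite {m'. w m' \<noteq> 0}" using w unfolding Nsp_def AE_def by blast
    ultimately have fin: "finite {m. v m \<noteq> 0}" using finite_subset by blast
    have vM: "v \<in> Msp p i j" using fin vD unfolding Msp_def AE_def DD_def by blast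
    have "phi v = w"
    proof
      fix m' show "phi v m' = w m'"
      proof (cases "m' \<in> ?E")
        case True
        then show ?thesis using F[OF vD, of m'] psi_EE[OF p0 i1 True] by (simp add: v_def)
      next
        case False
        then show ?thesis using F[OF vD, of m'] wE[of m'] by auto
      qed
    qed
    then show ?thesis using vM by blast
  qed
  have bij: "bij_betw (phi :: (monom \<Rightarrow> 'a) \<Rightarrow> _) (Msp p i j) (Nsp p (i - 1) (j div p))"
    unfolding bij_betw_def using inj img1 img2 by blast
  have lin: "phi (\<lambda>m. u m + v m) = (\<lambda>m. phi u m + phi v m) \<and> phi (\<lambda>m. c * v m) = (\<lambda>m. c * phi v m)"
    if u: "u \<in> Msp p i j" and v: "v \<in> Msp p i j" for u v :: "monom \<Rightarrow> 'a" and c :: 'a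
  proof -
    have s1: "\<forall>m. u m + v m \<noteq> 0 \<longrightarrow> m \<in> ?D" using MD[OF u] MD[OF v] by (metis add.right_neutral)
    have s2: "\<forall>m. c * v m \<noteq> 0 \<longrightarrow> m \<in> ?D" using MD[OF v] by (metis mult_zero_right)
    show ?thesis
      using F[OF s1] F[OF s2] F[OF MD[OF u]] F[OF MD[OF v]] by (auto intro!: ext)
  qed
  show ?thesis using bij lin by blast
qed

end
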